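(* Let $n\ge 1$, let $\Pi^n=(t_{\underline{k}})_{\underline{k}\in\mathbb{Z}^n}$ be a node sequence as described in the context, and let $\chi:\mathbb{R}\to\mathbb{R}$ be a one-dimensional kernel (with respect to each of the coordinate sequences $(t_{k_i})_{k_i\in\mathbb{Z}}$, $i=1,\dots,n$). Let $X(\underline{x}):=\prod_{i=1}^n\chi(x_i)$. Assume that $$\chi(x)=\mathcal{O}(|x|^{-2})\quad\text{as } |x|\to+\infty,$$ and that $m_{1,\Pi}(\chi)=+\infty$. Then there exists a constant $K>0$ depending only on the kernel $X$ (and the nodes) such that for every $f\in C(\mathbb{R}^n)$ (uniformly continuous and bounded) $$\|K^X_w f-f\|_\infty\le K\left[\omega\!\left(f,\frac{\log w}{w}\right)+\frac{\|f\|_\infty}{w}\right]$$ for every sufficiently large $w>0$.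
   Context: Nodes: for each $i=1,\dots,n$, $(t_{k_i})_{k_i\in\mathbb{Z}}$ is a strictly increasing real sequence with $t_{k_i}\to\pm\infty$ as $k_i\to\pm\infty$, and there are constants $0<\delta\le\Delta$ with $\delta\le \Delta_{k_i}:=t_{k_i+1}-t_{k_i}\le\Delta$ for all $k_i$ and all $i$. For $\underline{k}=(k_1,\dots,k_n)\in\mathbb{Z}^n$ set $t_{\underline{k}}=(t_{k_1},\dots,t_{k_n})$, $A_{\underline{k}}:=\Delta_{k_1}\cdots\Delta_{k_n}$, and for $w>0$, $R^w_{\underline{k}}:=[t_{k_1}/w,t_{k_1+1}/w]\times\cdots\times[t_{k_n}/w,t_{k_n+1}/w]$ (of Lebesgue measure $A_{\underline{k}}/w^n$). Kernel: a function $X:\mathbb{R}^n\to\mathbb{R}$ is a kernel (w.r.t. the nodes) if ($\chi1$) $X\in L^1(\mathbb{R}^n)$ and $X$ is bounded in a neighborhood of $\underline 0$; ($\chi2$) $\sum_{\underline{k}\in\mathbb{Z}^n}X(\underline{x}-t_{\underline{k}})=1$ for every $\underline{x}\in\mathbb{R}^n$; ($\chi3$) for some $\beta>0$, $m_{\beta,\Pi^n}(X):=\sup_{\underline{x}\in\mathbb{R}^n}\sum_{\underline{k}\in\mathbb{Z}^n}|X(\underline{x}-t_{\underline{k}})|\,\|\underline{x}-t_{\underline{k}}\|_2^\beta<+\infty$. A one-dimensional kernel is the case $n=1$, with moments denoted $m_{\beta,\Pi}(\chi)=\sup_{x\in\mathbb{R}}\sum_{k}|\chi(x-t_k)||x-t_k|^\beta$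 (for $\beta\ge 0$). Sampling Kantorovich operators: for a locally integrable $f:\mathbb{R}^n\to\mathbb{R}$ such that the series converges, $$(K^X_w f)(\underline{x}):=\sum_{\underline{k}\in\mathbb{Z}^n}X(w\underline{x}-t_{\underline{k}})\,\frac{w^n}{A_{\underline{k}}}\int_{R^w_{\underline{k}}}f(\underline{u})\,d\underline{u},\qquad \underline{x}\in\mathbb{R}^n,\ w>0.$$ $C(\mathbb{R}^n)$ denotes the space of uniformly continuous and bounded functions on $\mathbb{R}^n$, with sup norm $\|\cdot\|_\infty$, and $\omega(f,\delta):=\sup_{\|\underline{t}\|_2\le\delta}\sup_{\underline{x}}|f(\underline{x}+\underline{t})-f(\underline{x})|$ is its modulus of continuity. *)

theory Defs
  imports "HOL-Analysis.Analysis" "HOL-Library.Landau_Symbols"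
begin

definition node_seq :: "('n::finite \<Rightarrow> int \<Rightarrow> real) \<Rightarrow> bool" where
  "node_seq t \<longleftrightarrow> (\<exists>\<delta> \<Delta>. 0 < \<delta> \<and> \<delta> \<le> \<Delta> \<and>
     (\<forall>i. strict_mono (t i) \<and> filterlim (t i) at_top at_top \<and> filterlim (t i) at_bot at_bot \<and>
          (\<forall>k. \<delta> \<le> t i (k + 1) - t i k \<and> t i (k + 1) - t i k \<le> \<Delta>)))"

definition moment1 :: "(int \<Rightarrow> real) \<Rightarrow> (real \<Rightarrow> real) \<Rightarrow> real \<Rightarrow> ennreal" where
  "moment1 s chi \<beta> = (SUP x. (\<Sum>\<^sub>\<infinity>k\<in>UNIV. ennreal (\<bar>chi (x - s k)\<bar> * \<bar>x - s k\<bar> powr \<beta>)))"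

definition kernel1 :: "(int \<Rightarrow> real) \<Rightarrow> (real \<Rightarrow> real) \<Rightarrow> bool" where
  "kernel1 s chi \<longleftrightarrow>
     integrable lborel chi \<and>
     (\<exists>e>0. \<exists>B. \<forall>x. \<bar>x\<bar> < e \<longrightarrow> \<bar>chi x\<bar> \<le> B) \<and>
     (\<forall>x. ((\<lambda>k. chi (x - s k)) has_sum 1) UNIV) \<and>
     (\<exists>\<beta>>0. moment1 s chi \<beta> < \<infinity>)"

definition node_vec :: "('n::finite \<Rightarrow> int \<Rightarrow> real) \<Rightarrow> ('n \<Rightarrow> int) \<Rightarrow> real^'n" where
  "node_vec t k = (\<chi> i. t i (k i))"

definition cell_area :: "('n::finite \<Rightarrow> int \<Rightarrow> real) \<Rightarrow> ('n \<Rightarrow> int) \<Rightarrow> real" where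
  "cell_area t k = (\<Prod>i\<in>UNIV. t i (k i + 1) - t i (k i))"

definition cell :: "('n::finite \<Rightarrow> int \<Rightarrow> real) \<Rightarrow> real \<Rightarrow> ('n \<Rightarrow> int) \<Rightarrow> (real^'n) set" where
  "cell t w k = cbox (\<chi> i. t i (k i) / w) (\<chi> i. t i (k i + 1) / w)"

definition kantorovich ::
  "('n::finite \<Rightarrow> int \<Rightarrow> real) \<Rightarrow> (real^'n \<Rightarrow> real) \<Rightarrow> real \<Rightarrow> (real^'n \<Rightarrow> real) \<Rightarrow> real^'n \<Rightarrow> real" where
  "kantorovich t X w f x =
     (\<Sum>\<^sub>\<infinity>k\<in>UNIV. X (w *\<^sub>R x - node_vec t k) * (w ^ CARD('n) / cell_area t k) * integral (cell t w k) f)"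

definition modcont :: "(real^'n::finite \<Rightarrow> real) \<Rightarrow> real \<Rightarrow> real" where
  "modcont f \<delta> = Sup {\<bar>f (x + s) - f x\<bar> | x s. norm s \<le> \<delta>}"

definition supnorm :: "(real^'n::finite \<Rightarrow> real) \<Rightarrow> real" where
  "supnorm f = (SUP x. \<bar>f x\<bar>)"

end

theory Submission
  imports Defs
begin


lemma node_sep:
  fixes s :: "int \<Rightarrow> real"
  assumes gap: "\<forall>k. s k + \<delta> \<le> s (k+1)" and d: "\<delta> > 0" and kk: "k < k'"
  shows "s k + \<delta> \<le> s k'"
proof -
  have *: "s k + \<delta> \<le> s (k + 1 + int n)" for n
  proof (induction n)
    case 0 then show ?case using gap by simp
  next
    case (Suc n)
    have "s (k + 1 + int n) \<le> s (k + 1 + int n + 1)" using gap d by (smt (verit))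
    then show ?case using Suc by (simp add: add.assoc)
  qed
  obtain n where "k' = k + 1 + int n" using kk by (metis add.commute zless_iff_Suc_zadd of_nat_Suc add.left_commute)
  then show ?thesis using * by simp
qed

lemma inj_right:
  fixes s :: "int \<Rightarrow> real"
  assumes gap: "\<forall>k. s k + \<delta> \<le> s (k+1)" and d: "\<delta> > 0"
  shows "inj_on (\<lambda>k. nat \<lfloor>\<bar>x - s k\<bar> / \<delta>\<rfloor>) {k. x \<le> s k}"
proof -
  have lt: "nat \<lfloor>\<bar>x - s k\<bar> / \<delta>\<rfloor> < nat \<lfloor>\<bar>x - s k'\<bar> / \<delta>\<rfloor>"
    if "x \<le> s k" "x \<le> s k'" "k < k'" for k k'
  proof -
    have "s k + \<delta> \<le> s k'" using node_sep[OF gap d that(3)] .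
    then have "1 \<le> (s k' - s k)/\<delta>" using d by (simp add: le_divide_eq)
    then have "(s k - x)/\<delta> + 1 \<le> (s k' - x)/\<delta>" by (simp add: diff_divide_distrib)
    then have "\<lfloor>(s k - x)/\<delta>\<rfloor> + 1 \<le> \<lfloor>(s k' - x)/\<delta>\<rfloor>"
      by (metis floor_add_int floor_mono of_int_1)
    moreover have "0 \<le> \<lfloor>(s k - x)/\<delta>\<rfloor>" using that d by simp
    ultimately have "nat \<lfloor>(s k - x)/\<delta>\<rfloor> < nat \<lfloor>(s k' - x)/\<delta>\<rfloor>"
      using nat_less_eq_zless by (metis add1_zle_eq)
    moreover have "\<bar>x - s k\<bar> = s k - x" "\<bar>x - s k'\<bar> = s k' - x" using that by auto
    ultimately show ?thesis by (simp only:)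
  qed
  show ?thesis
  proof (rule inj_onI)
    fix k k' assume A: "k \<in> {k. x \<le> s k}" "k' \<in> {k. x \<le> s k}"
      and eq: "nat \<lfloor>\<bar>x - s k\<bar> / \<delta>\<rfloor> = nat \<lfloor>\<bar>x - s k'\<bar> / \<delta>\<rfloor>"
    show "k = k'"
    proof (rule ccontr)
      assume "k \<noteq> k'"
      then consider "k < k'" | "k' < k" by linarith
      then show False using lt[of k k'] lt[of k' k] A eq by (cases; auto)
    qed
  qed
qed

lemma inj_left:
  fixes s :: "int \<Rightarrow> real"
  assumes gap: "\<forall>k. s k + \<delta> \<le> s (k+1)" and d: "\<delta> > 0"
  shows "inj_on (\<lambda>k. nat \<lfloor>\<bar>x - s k\<bar> / \<delta>\<rfloor>) {k. s k < x}"
proof -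
  have lt: "nat \<lfloor>\<bar>x - s k'\<bar> / \<delta>\<rfloor> < nat \<lfloor>\<bar>x - s k\<bar> / \<delta>\<rfloor>"
    if "s k < x" "s k' < x" "k < k'" for k k'
  proof -
    have "s k + \<delta> \<le> s k'" using node_sep[OF gap d that(3)] .
    then have "1 \<le> (s k' - s k)/\<delta>" using d by (simp add: le_divide_eq)
    then have "(x - s k')/\<delta> + 1 \<le> (x - s k)/\<delta>" by (simp add: diff_divide_distrib)
    then have "\<lfloor>(x - s k')/\<delta>\<rfloor> + 1 \<le> \<lfloor>(x - s k)/\<delta>\<rfloor>"
      by (metis floor_add_int floor_mono of_int_1)
    moreover have "0 \<le> \<lfloor>(x - s k')/\<delta>\<rfloor>" using that d by simp
    ultimately have "nat \<lfloor>(x - s k')/\<delta>\<rfloor> < nat \<lfloor>(x - s k)/\<delta>\<rfloor>"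
      using nat_less_eq_zless by (metis add1_zle_eq)
    moreover have "\<bar>x - s k\<bar> = x - s k" "\<bar>x - s k'\<bar> = x - s k'" using that by auto
    ultimately show ?thesis by (simp only:)
  qed
  show ?thesis
  proof (rule inj_onI)
    fix k k' assume A: "k \<in> {k. s k < x}" "k' \<in> {k. s k < x}"
      and eq: "nat \<lfloor>\<bar>x - s k\<bar> / \<delta>\<rfloor> = nat \<lfloor>\<bar>x - s k'\<bar> / \<delta>\<rfloor>"
    show "k = k'"
    proof (rule ccontr)
      assume "k \<noteq> k'"
      then consider "k < k'" | "k' < k" by linarith
      then show False using lt[of k k'] lt[of k' k] A eq by (cases; auto)
    qed
  qed
qed

lemma count_set:
  fixes G :: "nat \<Rightarrow> real" and h :: "int \<Rightarrow> real"
  assumes inj: "inj_on j A" and G0: "\<And>n. 0 \<le> G n" and Gs: "G summable_on UNIV"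
   and h: "\<And>k. k \<in> A \<Longrightarrow> 0 \<le> h k \<and> h k \<le> G (j k)"
  shows "h summable_on A \<and> infsum h A \<le> infsum G UNIV"
proof -
  have "G summable_on j ` A" using summable_on_subset_banach[OF Gs] by auto
  then have s1: "(G \<circ> j) summable_on A" using summable_on_reindex[OF inj] by metis
  have hs: "h summable_on A"
    by (rule summable_on_comparison_test[OF s1]) (use h in auto)
  have "infsum h A \<le> infsum (G\<circ>j) A" by (rule infsum_mono[OF hs s1]) (use h in auto)
  also have "\<dots> = infsum G (j ` A)" by (simp add: infsum_reindex[OF inj])
  also have "\<dots> \<le> infsum G UNIV"
    by (rule infsum_mono_neutral) (use \<open>G summable_on j ` A\<close> Gs G0 in auto)
  finally show ?thesis using hs by simp
qed

lemma count_nodes: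
  fixes G :: "nat \<Rightarrow> real" and h :: "int \<Rightarrow> real" and s :: "int \<Rightarrow> real"
  assumes gap: "\<forall>k. s k + \<delta> \<le> s (k+1)" and d: "\<delta> > 0"
   and G0: "\<And>n. 0 \<le> G n" and Gs: "G summable_on UNIV"
   and h: "\<And>k. 0 \<le> h k \<and> h k \<le> G (nat \<lfloor>\<bar>x - s k\<bar> / \<delta>\<rfloor>)"
  shows "h summable_on UNIV \<and> infsum h UNIV \<le> 2 * infsum G UNIV"
proof -
  have a: "h summable_on {k. x \<le> s k} \<and> infsum h {k. x \<le> s k} \<le> infsum G UNIV"
  proof (rule count_set[OF inj_right[OF gap d] G0 Gs])
    fix k assume "k \<in> {k. x \<le> s k}"
    then have "\<bar>x - s k\<bar> = s k - x" by simp
    then show "0 \<le> h k \<and> h k \<le> G (nat \<lfloor>\<bar>x - s k\<bar> / \<delta>\<rfloor>)" using h[of k] by simp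
  qed
  have b: "h summable_on {k. s k < x} \<and> infsum h {k. s k < x} \<le> infsum G UNIV"
  proof (rule count_set[OF inj_left[OF gap d] G0 Gs])
    fix k assume "k \<in> {k. s k < x}"
    show "0 \<le> h k \<and> h k \<le> G (nat \<lfloor>\<bar>x - s k\<bar> / \<delta>\<rfloor>)" using h[of k] by simp
  qed
  have U: "UNIV = {k. x \<le> s k} \<union> {k. s k < x}" by auto
  have disj: "{k. x \<le> s k} \<inter> {k. s k < x} = {}" by auto
  have "h summable_on UNIV" using summable_on_Un_disjoint[OF _ _ disj] a b U by metis
  moreover have "infsum h UNIV = infsum h {k. x \<le> s k} + infsum h {k. s k < x}"
    using infsum_Un_disjoint[OF _ _ disj] a b U by metis
  ultimately show ?thesis using a b by simp
qed

lemma bounded_sums: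
  fixes G :: "'a \<Rightarrow> real"
  assumes "\<And>n. n \<in> A \<Longrightarrow> 0 \<le> G n" "\<And>F. finite F \<Longrightarrow> F \<subseteq> A \<Longrightarrow> sum G F \<le> b"
  shows "G summable_on A \<and> infsum G A \<le> b"
proof -
  have "G summable_on A"
    by (rule nonneg_bdd_above_summable_on) (use assms in \<open>auto intro!: bdd_aboveI\<close>)
  then show ?thesis using infsum_le_finite_sums assms by blast
qed


lemma term_le_moment:
  fixes s :: "int \<Rightarrow> real"
  shows "ennreal (\<bar>chi u\<bar> * \<bar>u\<bar> powr \<beta>) \<le> moment1 s chi \<beta>"
proof -
  let ?x = "u + s 0"
  let ?g = "\<lambda>k. ennreal (\<bar>chi (?x - s k)\<bar> * \<bar>?x - s k\<bar> powr \<beta>)"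
  have "infsum ?g {0} \<le> infsum ?g UNIV"
    by (rule infsum_mono_neutral) (auto intro: nonneg_summable_on_complete)
  then have "?g 0 \<le> infsum ?g UNIV" by simp
  also have "\<dots> \<le> moment1 s chi \<beta>" unfolding moment1_def by (rule SUP_upper) simp
  finally show ?thesis by simp
qed

lemma kernel_bounded:
  fixes s :: "int \<Rightarrow> real"
  assumes "kernel1 s chi"
  shows "\<exists>B. \<forall>u. \<bar>chi u\<bar> \<le> B"
proof -
  obtain e Bn \<beta> where e: "e > 0" and Bn: "\<forall>x. \<bar>x\<bar> < e \<longrightarrow> \<bar>chi x\<bar> \<le> Bn"
    and b: "\<beta> > 0" and M: "moment1 s chi \<beta> < \<infinity>"
    using assms unfolding kernel1_def by blast
  define Mr where "Mr = enn2real (moment1 s chi \<beta>)"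
  have Meq: "moment1 s chi \<beta> = ennreal Mr" using M unfolding Mr_def
    by (simp add: ennreal_enn2real_if less_top)
  have Mr0: "Mr \<ge> 0" unfolding Mr_def by simp
  have tb: "\<bar>chi u\<bar> * \<bar>u\<bar> powr \<beta> \<le> Mr" for u
    using term_le_moment[of chi u \<beta> s] Meq Mr0 by (simp add: ennreal_le_iff)
  have "\<bar>chi u\<bar> \<le> max Bn (Mr / e powr \<beta>)" for u
  proof (cases "\<bar>u\<bar> < e")
    case True then show ?thesis using Bn by force
  next
    case False
    then have "e powr \<beta> \<le> \<bar>u\<bar> powr \<beta>" using e b by (intro powr_mono2) auto
    moreover have ep: "e powr \<beta> > 0" using e by simp
    ultimately have "\<bar>chi u\<bar> * e powr \<beta> \<le> Mr" using tb[of u]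
      by (meson abs_ge_zero mult_left_mono order_trans)
    then have "\<bar>chi u\<bar> \<le> Mr / e powr \<beta>" using ep by (simp add: le_divide_eq)
    then show ?thesis by simp
  qed
  then show ?thesis by blast
qed

lemma kernel_decay:
  fixes chi :: "real \<Rightarrow> real"
  assumes "chi \<in> O[at_infinity](\<lambda>x. 1 / x ^ 2)"
  shows "\<exists>C R. C > 0 \<and> R \<ge> 1 \<and> (\<forall>u. R \<le> \<bar>u\<bar> \<longrightarrow> \<bar>chi u\<bar> \<le> C / u^2)"
proof -
  obtain c where c: "c > 0" and ev: "eventually (\<lambda>x. norm (chi x) \<le> c * norm (1 / x^2)) at_infinity"
    using assms unfolding bigo_def by blast
  obtain b where b: "\<forall>x. b \<le> norm x \<longrightarrow> norm (chi x) \<le> c * norm (1 / x^2)"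
    using ev unfolding eventually_at_infinity by blast
  have "\<forall>u. max b 1 \<le> \<bar>u\<bar> \<longrightarrow> \<bar>chi u\<bar> \<le> c / u^2"
    using b by (auto simp: divide_inverse)
  then show ?thesis using c by (intro exI[of _ c] exI[of _ "max b 1"]) auto
qed


lemma floor_div_facts:
  fixes a \<delta> :: real assumes "\<delta> > 0" "a \<ge> 0"
  shows "real (nat \<lfloor>a/\<delta>\<rfloor>) * \<delta> \<le> a" "a < (real (nat \<lfloor>a/\<delta>\<rfloor>) + 1) * \<delta>"
proof -
  have f0: "0 \<le> \<lfloor>a/\<delta>\<rfloor>" using assms by simp
  then have eq: "real (nat \<lfloor>a/\<delta>\<rfloor>) = real_of_int \<lfloor>a/\<delta>\<rfloor>" by simp
  have "real_of_int \<lfloor>a/\<delta>\<rfloor> \<le> a/\<delta>" by simp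
  then show "real (nat \<lfloor>a/\<delta>\<rfloor>) * \<delta> \<le> a" using assms eq by (simp add: le_divide_eq)
  have "a/\<delta> < real_of_int \<lfloor>a/\<delta>\<rfloor> + 1" by linarith
  then have "a < (real_of_int \<lfloor>a/\<delta>\<rfloor> + 1) * \<delta>" by (metis pos_divide_less_eq assms(1))
  then show "a < (real (nat \<lfloor>a/\<delta>\<rfloor>) + 1) * \<delta>" using eq by simp
qed

lemma inv_sq_tail:
  fixes J :: nat assumes J: "J \<ge> 1" and F: "finite F" "F \<subseteq> {J..}"
  shows "(\<Sum>j\<in>F. 1 / (real j)^2) \<le> 2 / real J"
proof (cases "F = {}")
  case True then show ?thesis by simp
next
  case False
  define N where "N = Max F"
  have FN: "F \<subseteq> {J..N}" using F False unfolding N_def by auto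
  have JN: "J \<le> N" using FN False by auto
  have "(\<Sum>j\<in>F. 1 / (real j)^2) \<le> (\<Sum>j\<in>{J..N}. 1 / (real j)^2)"
    by (rule sum_mono2) (use FN in auto)
  also have "\<dots> \<le> (\<Sum>j\<in>{J..N}. 2 * ((- 1 / real (Suc j)) - (- 1 / real j)))"
  proof (rule sum_mono)
    fix j assume "j \<in> {J..N}"
    then have j: "real j \<ge> 1" using J by auto
    have e: "2 * ((- 1 / real (Suc j)) - (- 1 / real j)) = 2 / (real j * (real j + 1))"
      using j by (simp add: field_simps)
    have jj: "real j * 1 \<le> real j * real j" using j by (intro mult_left_mono) auto
    have "1 / (real j)^2 = 2 / (2 * (real j * real j))" by (simp add: power2_eq_square)
    also have "\<dots> \<le> 2 / (real j * (real j + 1))"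
    proof (rule frac_le)
      show "0 < real j * (real j + 1)" using j by simp
      show "real j * (real j + 1) \<le> 2 * (real j * real j)" using jj by (simp add: algebra_simps)
    qed simp_all
    finally show "1 / (real j)^2 \<le> 2 * ((- 1 / real (Suc j)) - (- 1 / real j))" using e by simp
  qed
  also have "\<dots> = 2 * (\<Sum>j\<in>{J..N}. (- 1 / real (Suc j)) - (- 1 / real j))"
    by (simp add: sum_distrib_left)
  also have "\<dots> = 2 * ((- 1 / real (Suc N)) - (- 1 / real J))"
    using sum_Suc_diff[of J N "\<lambda>j. - 1 / real j"] JN by simp
  also have "\<dots> \<le> 2 / real J" by simp
  finally show ?thesis .
qed

lemma harm_ln:
  fixes N :: nat assumes "N \<ge> 1"
  shows "(\<Sum>j\<in>{1..N}. 1 / real j) \<le> 1 + ln (real N)"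
  using assms
proof (induction N rule: dec_induct)
  case base then show ?case by simp
next
  case (step n)
  have n: "real n \<ge> 1" using step by simp
  have "ln (real n / (real n + 1)) \<le> real n / (real n + 1) - 1"
    using n by (intro ln_le_minus_one) simp
  also have "\<dots> = - 1 / (real n + 1)" using n by (simp add: field_simps)
  finally have "ln (real n) - ln (real n + 1) \<le> - 1 / (real n + 1)"
    using n by (simp add: ln_div)
  then show ?case using step by (simp add: add.commute)
qed


locale K1 =
  fixes s :: "int \<Rightarrow> real" and \<delta> :: real and chi :: "real \<Rightarrow> real" and B C R :: real
  assumes gap: "\<forall>k. s k + \<delta> \<le> s (k+1)" and dpos: "\<delta> > 0"
    and Bb: "\<forall>u. \<bar>chi u\<bar> \<le> B" and Cp: "C > 0" and R1: "R \<ge> 1"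
    and dec: "\<forall>u. R \<le> \<bar>u\<bar> \<longrightarrow> \<bar>chi u\<bar> \<le> C / u^2"
begin

lemma B0: "B \<ge> 0" using Bb by (meson abs_ge_zero order_trans)

lemma jfacts:
  "real (nat \<lfloor>\<bar>x - s k\<bar>/\<delta>\<rfloor>) * \<delta> \<le> \<bar>x - s k\<bar>"
  "\<bar>x - s k\<bar> < (real (nat \<lfloor>\<bar>x - s k\<bar>/\<delta>\<rfloor>) + 1) * \<delta>"
  using floor_div_facts[OF dpos, of "\<bar>x - s k\<bar>"] by auto

lemma dec_le:
  assumes "R \<le> a" "a \<le> \<bar>u\<bar>" shows "\<bar>chi u\<bar> \<le> C / a^2"
proof -
  have a0: "a > 0" using assms R1 by linarith
  have "\<bar>chi u\<bar> \<le> C / u^2" using dec assms by force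
  also have "\<dots> \<le> C / a^2"
  proof (rule divide_left_mono)
    show "a^2 \<le> u^2" using assms a0 by (metis abs_le_square_iff abs_of_pos)
  qed (use a0 Cp assms in \<open>auto simp: zero_less_mult_iff\<close>)
  finally show ?thesis .
qed

lemma dec_le1:
  assumes "R \<le> a" "a \<le> \<bar>u\<bar>" shows "\<bar>chi u\<bar> * \<bar>u\<bar> \<le> C / a"
proof -
  have a0: "a > 0" using assms R1 by linarith
  have u0: "\<bar>u\<bar> > 0" using a0 assms by linarith
  have "\<bar>chi u\<bar> * \<bar>u\<bar> \<le> C / \<bar>u\<bar>^2 * \<bar>u\<bar>"
    using dec_le[of "\<bar>u\<bar>" u] assms by (intro mult_right_mono) auto
  also have "\<dots> = C / \<bar>u\<bar>"
  proof -
    have "C / v^2 * v = C / v" if "v > 0" for v :: real using that by (simp add: power2_eq_square)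
    then show ?thesis using u0 by blast
  qed
  also have "\<dots> \<le> C / a" using assms a0 Cp by (intro divide_left_mono) auto
  finally show ?thesis .
qed

lemma card_small: "card {j\<in>F. real j * \<delta> < R} \<le> R / \<delta> + 1"
proof -
  have "{j\<in>F. real j * \<delta> < R} \<subseteq> {..< nat \<lceil>R/\<delta>\<rceil>}"
  proof
    fix j assume "j \<in> {j\<in>F. real j * \<delta> < R}"
    then have "real j < R/\<delta>" using dpos by (simp add: less_divide_eq)
    then have "int j < \<lceil>R/\<delta>\<rceil>" by (simp add: less_ceiling_iff)
    then show "j \<in> {..< nat \<lceil>R/\<delta>\<rceil>}" by (simp add: zless_nat_eq_int_zless)
  qed
  then have "card {j\<in>F. real j * \<delta> < R} \<le> nat \<lceil>R/\<delta>\<rceil>"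
    using card_mono[OF finite_lessThan] card_lessThan by metis
  then have "real (card {j\<in>F. real j * \<delta> < R}) \<le> real (nat \<lceil>R/\<delta>\<rceil>)" by linarith
  also have "real (nat \<lceil>R/\<delta>\<rceil>) = real_of_int \<lceil>R/\<delta>\<rceil>"
  proof -
    have rd: "0 \<le> R/\<delta>" using R1 dpos by simp
    show ?thesis by (intro of_nat_nat) (use rd in \<open>simp add: zero_le_ceiling\<close>)
  qed
  also have "\<dots> \<le> R/\<delta> + 1" by (rule of_int_ceiling_le_add_one)
  finally show ?thesis .
qed

definition M0 where "M0 = 2 * (B * (R/\<delta> + 1) + 2 * C / \<delta>^2)"

lemma m0:
  "(\<lambda>k. \<bar>chi (x - s k)\<bar>) summable_on UNIV \<and> infsum (\<lambda>k. \<bar>chi (x - s k)\<bar>) UNIV \<le> M0"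
proof -
  define G where "G j = (if real j * \<delta> < R then B else C / (real j * \<delta>)^2)" for j :: nat
  have G0: "0 \<le> G j" for j using B0 Cp unfolding G_def by auto
  have Gsum: "sum G F \<le> B * (R/\<delta> + 1) + 2 * C / \<delta>^2" if "finite F" for F
  proof -
    let ?F1 = "{j\<in>F. real j * \<delta> < R}" and ?F2 = "{j\<in>F. \<not> real j * \<delta> < R}"
    have e: "sum G F = sum (\<lambda>j. B) ?F1 + sum (\<lambda>j. C / (real j * \<delta>)^2) ?F2"
      unfolding G_def using that by (simp add: sum.If_cases Collect_conj_eq Int_commute Compl_eq)
    have a: "sum (\<lambda>j. B) ?F1 \<le> B * (R/\<delta> + 1)"
      using card_small[of F] B0 by (simp add: mult.commute mult_left_mono)
    have e2: "sum (\<lambda>j. C / (real j * \<delta>)^2) ?F2 = C / \<delta>^2 * (\<Sum>j\<in>?F2. 1 / (real j)^2)"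
      by (simp add: sum_distrib_left power_mult_distrib mult.commute)
    have b: "(\<Sum>j\<in>?F2. 1 / (real j)^2) \<le> 2 / real (1::nat)"
    proof (rule inv_sq_tail)
      show "?F2 \<subseteq> {1..}"
      proof
        fix j assume "j \<in> ?F2"
        then have "j \<noteq> 0" using R1 by (cases "j = 0") auto
        then show "j \<in> {1..}" by simp
      qed
    qed (use that in auto)
    have m: "C / \<delta>^2 * (\<Sum>j\<in>?F2. 1 / (real j)^2) \<le> C / \<delta>^2 * 2"
      using b Cp by (intro mult_left_mono) auto
    have "sum G F = sum (\<lambda>j. B) ?F1 + C / \<delta>^2 * (\<Sum>j\<in>?F2. 1 / (real j)^2)" using e e2 by simp
    also have "\<dots> \<le> B * (R/\<delta> + 1) + C / \<delta>^2 * 2" using a m by (rule add_mono)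
    also have "\<dots> = B * (R/\<delta> + 1) + 2 * C / \<delta>^2" by simp
    finally show ?thesis .
  qed
  have Gs: "G summable_on UNIV \<and> infsum G UNIV \<le> B * (R/\<delta> + 1) + 2 * C / \<delta>^2"
    by (rule bounded_sums) (use G0 Gsum in auto)
  have h: "0 \<le> \<bar>chi (x - s k)\<bar> \<and> \<bar>chi (x - s k)\<bar> \<le> G (nat \<lfloor>\<bar>x - s k\<bar> / \<delta>\<rfloor>)" for k
  proof -
    let ?j = "nat \<lfloor>\<bar>x - s k\<bar> / \<delta>\<rfloor>"
    show ?thesis
    proof (cases "real ?j * \<delta> < R")
      case True then show ?thesis using Bb unfolding G_def by auto
    next
      case False
      then show ?thesis unfolding G_def using dec_le[of "real ?j * \<delta>" "x - s k"] jfacts[of x k] by auto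
    qed
  qed
  have "(\<lambda>k. \<bar>chi (x - s k)\<bar>) summable_on UNIV \<and> infsum (\<lambda>k. \<bar>chi (x - s k)\<bar>) UNIV \<le> 2 * infsum G UNIV"
    by (rule count_nodes[OF gap dpos G0]) (use Gs h in auto)
  then show ?thesis using Gs unfolding M0_def by (smt (verit))
qed

end


context K1 begin

lemma tail:
  assumes w1: "w \<ge> R + \<delta>" and w2: "w \<ge> 2 * \<delta>"
  shows "(\<lambda>k. if w < \<bar>x - s k\<bar> then \<bar>chi (x - s k)\<bar> else 0) summable_on UNIV \<and>
         infsum (\<lambda>k. if w < \<bar>x - s k\<bar> then \<bar>chi (x - s k)\<bar> else 0) UNIV \<le> 8 * C / (\<delta> * w)"
proof -
  define G where "G j = (if w < (real j + 1) * \<delta> then C / (real j * \<delta>)^2 else 0)" for j :: nat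
  have G0: "0 \<le> G j" for j using Cp unfolding G_def by auto
  define J where "J = nat \<lceil>w/\<delta> - 1\<rceil>"
  have wd: "w/\<delta> - 1 \<ge> w / (2*\<delta>)" using w2 dpos by (simp add: field_simps)
  have wd1: "w / (2*\<delta>) \<ge> 1" using w2 dpos by (simp add: field_simps)
  have y0: "w/\<delta> - 1 \<ge> 0" using wd wd1 by linarith
  have "real J = real_of_int \<lceil>w/\<delta> - 1\<rceil>" unfolding J_def
    by (intro of_nat_nat) (use y0 in \<open>simp add: zero_le_ceiling\<close>)
  then have Jge: "real J \<ge> w/\<delta> - 1" using le_of_int_ceiling by simp
  have J1: "J \<ge> 1" using Jge wd wd1 by linarith
  have Gsum: "sum G F \<le> 4 * C / (\<delta> * w)" if "finite F" for F
  proof -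
    let ?F = "{j\<in>F. w < (real j + 1) * \<delta>}"
    have e: "sum G F = C / \<delta>^2 * (\<Sum>j\<in>?F. 1 / (real j)^2)"
      unfolding G_def using that
      by (simp add: sum.If_cases sum_distrib_left power_mult_distrib mult.commute Collect_conj_eq Int_commute)
    have b: "(\<Sum>j\<in>?F. 1 / (real j)^2) \<le> 2 / real J"
    proof (rule inv_sq_tail[OF J1])
      show "?F \<subseteq> {J..}"
      proof
        fix j assume "j \<in> ?F"
        then have "w/\<delta> - 1 < real j" using dpos by (simp add: divide_less_eq algebra_simps)
        then have "\<lceil>w/\<delta> - 1\<rceil> \<le> int j" by (metis ceiling_le less_imp_le of_int_of_nat_eq)
        then show "j \<in> {J..}" unfolding J_def by simp
      qed
    qed (use that in auto)
    have "2 / real J \<le> 2 / (w / (2*\<delta>))"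
    proof (rule divide_left_mono)
      have "0 < real J" using J1 by simp
      moreover have "0 < w / (2*\<delta>)" using wd1 by linarith
      ultimately have "0 < real J * (w / (2*\<delta>))" by (rule mult_pos_pos)
      then show "0 < real J * (w / (2*\<delta>))" .
    qed (use Jge wd in auto)
    also have "\<dots> = 4 * \<delta> / w" by simp
    finally have b2: "(\<Sum>j\<in>?F. 1 / (real j)^2) \<le> 4 * \<delta> / w" using b by linarith
    have "sum G F \<le> C / \<delta>^2 * (4 * \<delta> / w)" unfolding e using b2 Cp by (intro mult_left_mono) auto
    also have "\<dots> = 4 * C / (\<delta> * w)" using dpos by (simp add: power2_eq_square field_simps)
    finally show ?thesis .
  qed
  have Gs: "G summable_on UNIV \<and> infsum G UNIV \<le> 4 * C / (\<delta> * w)"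
    by (rule bounded_sums) (use G0 Gsum in auto)
  have h: "0 \<le> (if w < \<bar>x - s k\<bar> then \<bar>chi (x - s k)\<bar> else 0) \<and>
      (if w < \<bar>x - s k\<bar> then \<bar>chi (x - s k)\<bar> else 0) \<le> G (nat \<lfloor>\<bar>x - s k\<bar> / \<delta>\<rfloor>)" for k
  proof (cases "w < \<bar>x - s k\<bar>")
    case True
    let ?j = "nat \<lfloor>\<bar>x - s k\<bar> / \<delta>\<rfloor>"
    have a: "w < (real ?j + 1) * \<delta>" using True jfacts(2)[of x k] by linarith
    have "R \<le> real ?j * \<delta>" using a w1 by (simp add: algebra_simps)
    then have "\<bar>chi (x - s k)\<bar> \<le> C / (real ?j * \<delta>)^2" using dec_le jfacts(1)[of x k] by blast
    then show ?thesis using True a unfolding G_def by simp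
  qed (use G0 in simp)
  have "(\<lambda>k. if w < \<bar>x - s k\<bar> then \<bar>chi (x - s k)\<bar> else 0) summable_on UNIV \<and>
     infsum (\<lambda>k. if w < \<bar>x - s k\<bar> then \<bar>chi (x - s k)\<bar> else 0) UNIV \<le> 2 * infsum G UNIV"
    by (rule count_nodes[OF gap dpos G0, where x=x]) (use Gs h in auto)
  moreover have "2 * (4 * C / (\<delta> * w)) = 8 * C / (\<delta> * w)" by simp
  ultimately show ?thesis using Gs by (smt (verit))
qed

end


context K1 begin

definition P1 where "P1 = B * (R/\<delta> + 1) * (R + \<delta>)"

lemma harm_part:
  assumes w: "w \<ge> \<delta>" and F: "finite F" "F \<subseteq> {j. R \<le> real j * \<delta> \<and> real j * \<delta> \<le> w}"
  shows "(\<Sum>j\<in>F. C / (real j * \<delta>)) \<le> C / \<delta> * (1 + ln (w/\<delta>))"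
proof -
  define N where "N = nat \<lfloor>w/\<delta>\<rfloor>"
  have wd: "w/\<delta> \<ge> 1" using w dpos by (simp add: field_simps)
  have FN: "F \<subseteq> {1..N}"
  proof
    fix j assume "j \<in> F"
    then have j: "R \<le> real j * \<delta>" "real j * \<delta> \<le> w" using F by auto
    then have "j \<noteq> 0" using R1 by (cases "j = 0") auto
    moreover have "real j \<le> w/\<delta>" using j dpos by (simp add: le_divide_eq)
    then have "int j \<le> \<lfloor>w/\<delta>\<rfloor>" by (metis floor_mono floor_of_nat)
    ultimately show "j \<in> {1..N}" unfolding N_def by auto
  qed
  have "(\<Sum>j\<in>F. C / (real j * \<delta>)) \<le> (\<Sum>j\<in>{1..N}. C / (real j * \<delta>))"
    by (rule sum_mono2) (use FN Cp dpos in auto)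
  also have "\<dots> = C / \<delta> * (\<Sum>j\<in>{1..N}. 1 / real j)" by (simp add: sum_distrib_left mult.commute)
  also have "\<dots> \<le> C / \<delta> * (1 + ln (w/\<delta>))"
  proof (cases "N \<ge> 1")
    case True
    have "real N \<le> w/\<delta>" unfolding N_def using wd by linarith
    then have "ln (real N) \<le> ln (w/\<delta>)" using True by (subst ln_le_cancel_iff) auto
    then have "(\<Sum>j\<in>{1..N}. 1 / real j) \<le> 1 + ln (w/\<delta>)" using harm_ln[OF True] by linarith
    then show ?thesis using Cp dpos by (intro mult_left_mono) auto
  next
    case False
    then have "{1..N} = {}" by auto
    moreover have "0 \<le> ln (w/\<delta>)" using wd by simp
    ultimately show ?thesis using Cp dpos by simp
  qed
  finally show ?thesis .
qed

lemma mid: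
  assumes w: "w \<ge> \<delta>"
  shows "(\<lambda>k. \<bar>chi (x - s k)\<bar> * (if \<bar>x - s k\<bar> \<le> w then \<bar>x - s k\<bar> else 0)) summable_on UNIV \<and>
         infsum (\<lambda>k. \<bar>chi (x - s k)\<bar> * (if \<bar>x - s k\<bar> \<le> w then \<bar>x - s k\<bar> else 0)) UNIV
           \<le> 2 * (P1 + C / \<delta> * (1 + ln (w/\<delta>)))"
proof -
  define G where "G j = (if real j * \<delta> < R then B * (R + \<delta>) else if real j * \<delta> \<le> w then C / (real j * \<delta>) else 0)" for j :: nat
  have BR: "0 \<le> B * (R + \<delta>)" using B0 R1 dpos by simp
  have G0: "0 \<le> G j" for j using Cp BR dpos unfolding G_def by auto
  have Gsum: "sum G F \<le> P1 + C / \<delta> * (1 + ln (w/\<delta>))" if "finite F" for F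
  proof -
    let ?F1 = "{j\<in>F. real j * \<delta> < R}" and ?F3 = "{j\<in>F. R \<le> real j * \<delta> \<and> real j * \<delta> \<le> w}"
    have e: "sum G F = sum (\<lambda>j. B * (R + \<delta>)) ?F1 + sum (\<lambda>j. C / (real j * \<delta>)) ?F3"
    proof -
      have "sum G F = sum (\<lambda>j. B * (R + \<delta>)) ?F1 + sum (\<lambda>j. if real j * \<delta> \<le> w then C / (real j * \<delta>) else 0) {j\<in>F. \<not> real j * \<delta> < R}"
        unfolding G_def using that by (simp add: sum.If_cases Collect_conj_eq Int_commute Compl_eq)
      also have "sum (\<lambda>j. if real j * \<delta> \<le> w then C / (real j * \<delta>) else 0) {j\<in>F. \<not> real j * \<delta> < R}
          = sum (\<lambda>j. C / (real j * \<delta>)) ?F3"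
        using that by (simp add: sum.inter_filter[symmetric] not_less)
      finally show ?thesis .
    qed
    have a: "sum (\<lambda>j. B * (R + \<delta>)) ?F1 \<le> P1"
    proof -
      have "sum (\<lambda>j. B * (R + \<delta>)) ?F1 = real (card ?F1) * (B * (R + \<delta>))" by simp
      also have "\<dots> \<le> (R/\<delta> + 1) * (B * (R + \<delta>))"
        using card_small[of F] B0 R1 dpos by (intro mult_right_mono) auto
      also have "(R/\<delta> + 1) * (B * (R + \<delta>)) = P1" unfolding P1_def by (simp only: mult.assoc mult.commute mult.left_commute)
      finally show ?thesis .
    qed
    have b: "sum (\<lambda>j. C / (real j * \<delta>)) ?F3 \<le> C / \<delta> * (1 + ln (w/\<delta>))"
      by (rule harm_part[OF w]) (use that in auto)
    show ?thesis using e a b by linarith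
  qed
  have Gs: "G summable_on UNIV \<and> infsum G UNIV \<le> P1 + C / \<delta> * (1 + ln (w/\<delta>))"
    by (rule bounded_sums) (use G0 Gsum in auto)
  have h: "0 \<le> \<bar>chi (x - s k)\<bar> * (if \<bar>x - s k\<bar> \<le> w then \<bar>x - s k\<bar> else 0) \<and>
      \<bar>chi (x - s k)\<bar> * (if \<bar>x - s k\<bar> \<le> w then \<bar>x - s k\<bar> else 0) \<le> G (nat \<lfloor>\<bar>x - s k\<bar> / \<delta>\<rfloor>)" for k
  proof -
    let ?j = "nat \<lfloor>\<bar>x - s k\<bar> / \<delta>\<rfloor>"
    let ?u = "x - s k"
    have j1: "real ?j * \<delta> \<le> \<bar>?u\<bar>" and j2: "\<bar>?u\<bar> < (real ?j + 1) * \<delta>" using jfacts by auto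
    show ?thesis
    proof (cases "real ?j * \<delta> < R")
      case True
      have "\<bar>chi ?u\<bar> * (if \<bar>?u\<bar> \<le> w then \<bar>?u\<bar> else 0) \<le> B * \<bar>?u\<bar>"
        using Bb[rule_format, of ?u] B0 by (auto intro: mult_right_mono)
      also have "\<dots> \<le> B * (R + \<delta>)" using j2 True B0 by (intro mult_left_mono) (auto simp: algebra_simps)
      finally show ?thesis using True unfolding G_def by simp
    next
      case False
      show ?thesis
      proof (cases "\<bar>?u\<bar> \<le> w")
        case True
        have "\<bar>chi ?u\<bar> * \<bar>?u\<bar> \<le> C / (real ?j * \<delta>)" using dec_le1[of "real ?j * \<delta>" ?u] False j1 by simp
        then show ?thesis using True False j1 unfolding G_def by simp
      qed (use G0 in simp)
    qed
  qed
  have "(\<lambda>k. \<bar>chi (x - s k)\<bar> * (if \<bar>x - s k\<bar> \<le> w then \<bar>x - s k\<bar> else 0)) summable_on UNIV \<and>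
     infsum (\<lambda>k. \<bar>chi (x - s k)\<bar> * (if \<bar>x - s k\<bar> \<le> w then \<bar>x - s k\<bar> else 0)) UNIV \<le> 2 * infsum G UNIV"
    by (rule count_nodes[OF gap dpos G0, where x=x]) (use Gs h in auto)
  then show ?thesis using Gs by (smt (verit))
qed

end


lemma bnd_f:
  fixes f :: "real^'n \<Rightarrow> real"
  assumes "bounded (range f)" shows "\<exists>M. \<forall>x. \<bar>f x\<bar> \<le> M"
  using assms unfolding bounded_iff by auto

lemma supnorm_ge:
  fixes f :: "real^'n \<Rightarrow> real"
  assumes "bounded (range f)" shows "\<bar>f x\<bar> \<le> supnorm f"
proof -
  obtain M where "\<forall>x. \<bar>f x\<bar> \<le> M" using bnd_f[OF assms] by blast
  then have "bdd_above (range (\<lambda>x. \<bar>f x\<bar>))" by (auto intro: bdd_aboveI2)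
  then show ?thesis unfolding supnorm_def using cSUP_upper[of x UNIV "\<lambda>x. \<bar>f x\<bar>"] by simp
qed

lemma supnorm_nonneg:
  fixes f :: "real^'n \<Rightarrow> real"
  assumes "bounded (range f)" shows "0 \<le> supnorm f"
  using supnorm_ge[OF assms, of 0] by linarith

lemma modcont_ge:
  fixes f :: "real^'n \<Rightarrow> real"
  assumes "bounded (range f)" "norm h \<le> d"
  shows "\<bar>f (x + h) - f x\<bar> \<le> modcont f d"
proof -
  obtain M where M: "\<forall>x. \<bar>f x\<bar> \<le> M" using bnd_f[OF assms(1)] by blast
  have "bdd_above {\<bar>f (x + s) - f x\<bar> | x s. norm s \<le> d}"
  proof (rule bdd_aboveI)
    fix y assume "y \<in> {\<bar>f (x + s) - f x\<bar> | x s. norm s \<le> d}"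
    then obtain x s where "y = \<bar>f (x + s) - f x\<bar>" by blast
    then show "y \<le> 2 * M" using M[rule_format, of x] M[rule_format, of "x+s"] by linarith
  qed
  moreover have "\<bar>f (x + h) - f x\<bar> \<in> {\<bar>f (x + s) - f x\<bar> | x s. norm s \<le> d}" using assms(2) by blast
  ultimately show ?thesis unfolding modcont_def by (intro cSup_upper) auto
qed

lemma modcont_nonneg:
  fixes f :: "real^'n \<Rightarrow> real"
  assumes "bounded (range f)" "0 \<le> d" shows "0 \<le> modcont f d"
  using modcont_ge[OF assms(1), of 0 d 0] assms(2) by simp

lemma modcont_mult:
  fixes f :: "real^'n \<Rightarrow> real"
  assumes bf: "bounded (range f)" and d: "0 < d"
  shows "\<bar>f (x + h) - f x\<bar> \<le> (1 + norm h / d) * modcont f d"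
proof (cases "h = 0")
  case True
  then show ?thesis using modcont_nonneg[OF bf, of d] d by simp
next
  case False
  define m where "m = nat \<lceil>norm h / d\<rceil>"
  have hd: "norm h / d > 0" using False d by simp
  have mr: "real m = real_of_int \<lceil>norm h / d\<rceil>" unfolding m_def using hd by (intro of_nat_nat) simp
  then have m1: "real m \<ge> norm h / d" by simp
  have m2: "real m \<le> norm h / d + 1" using mr of_int_ceiling_le_add_one by simp
  have mpos: "real m > 0" using m1 hd by linarith
  define y where "y i = x + (real i / real m) *\<^sub>R h" for i :: nat
  have step: "\<bar>f (y (Suc i)) - f (y i)\<bar> \<le> modcont f d" for i
  proof -
    have "y (Suc i) = y i + (1 / real m) *\<^sub>R h" unfolding y_def using mpos
      by (simp add: algebra_simps add_divide_distrib scaleR_add_left)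
    moreover have "norm ((1 / real m) *\<^sub>R h) \<le> d"
    proof -
      have "norm ((1 / real m) *\<^sub>R h) = norm h / real m" using mpos by simp
      also have "\<dots> \<le> d" using m1 mpos d by (simp add: divide_le_eq mult.commute pos_divide_le_eq)
      finally show ?thesis .
    qed
    ultimately show ?thesis using modcont_ge[OF bf] by simp
  qed
  have "f (x + h) - f x = f (y m) - f (y 0)" unfolding y_def using mpos by simp
  also have "\<dots> = (\<Sum>i<m. f (y (Suc i)) - f (y i))" by (rule sum_lessThan_telescope[symmetric])
  finally have "\<bar>f (x + h) - f x\<bar> \<le> (\<Sum>i<m. \<bar>f (y (Suc i)) - f (y i)\<bar>)"
    by (metis sum_abs)
  also have "\<dots> \<le> (\<Sum>i<m. modcont f d)" by (rule sum_mono) (rule step)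
  also have "\<dots> = real m * modcont f d" by simp
  also have "\<dots> \<le> (1 + norm h / d) * modcont f d"
    using m2 modcont_nonneg[OF bf, of d] d by (intro mult_right_mono) auto
  finally show ?thesis .
qed


lemma cell_content:
  fixes t :: "'n::finite \<Rightarrow> int \<Rightarrow> real"
  assumes inc: "\<forall>i k. t i k < t i (k+1)" and w: "w > 0"
  shows "Henstock_Kurzweil_Integration.content (cell t w p) = cell_area t p / w ^ CARD('n)"
    and "cell_area t p > 0"
proof -
  have "(\<chi> i. t i (p i) / w) \<in> cell t w p" unfolding cell_def mem_box_cart using inc w
    by (simp add: less_imp_le divide_right_mono)
  then have ne: "cell t w p \<noteq> {}" by blast
  have "Henstock_Kurzweil_Integration.content (cell t w p) = (\<Prod>i\<in>UNIV. t i (p i + 1) / w - t i (p i) / w)"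
    using content_cbox_cart[OF ne[unfolded cell_def]] unfolding cell_def by simp
  also have "\<dots> = (\<Prod>i\<in>UNIV. (t i (p i + 1) - t i (p i)) / w)" by (simp add: diff_divide_distrib)
  also have "\<dots> = cell_area t p / w ^ CARD('n)" unfolding cell_area_def by (simp add: prod_dividef)
  finally show "Henstock_Kurzweil_Integration.content (cell t w p) = cell_area t p / w ^ CARD('n)" .
  show "cell_area t p > 0" unfolding cell_area_def using inc by (intro prod_pos) auto
qed

lemma avg_bound:
  fixes t :: "'n::finite \<Rightarrow> int \<Rightarrow> real" and f :: "real^'n \<Rightarrow> real"
  assumes inc: "\<forall>i k. t i k < t i (k+1)" and w: "w > 0"
    and fc: "continuous_on UNIV f" and E: "0 \<le> E"
    and bd: "\<And>y. y \<in> cell t w p \<Longrightarrow> \<bar>f y - c\<bar> \<le> E"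
  shows "\<bar>w ^ CARD('n) / cell_area t p * integral (cell t w p) f - c\<bar> \<le> E"
proof -
  let ?K = "cell t w p"
  have ct: "Henstock_Kurzweil_Integration.content ?K = cell_area t p / w ^ CARD('n)" and A: "cell_area t p > 0"
    using cell_content[OF inc w] by auto
  obtain a b where K: "?K = cbox a b" unfolding cell_def by blast
  have fi: "(f has_integral integral ?K f) ?K"
    unfolding K by (rule integrable_integral, rule integrable_continuous) (use fc continuous_on_subset in blast)
  have ci: "((\<lambda>x. c) has_integral Henstock_Kurzweil_Integration.content ?K * c) ?K" unfolding K using has_integral_const[of c a b] by simp
  have di: "((\<lambda>x. f x - c) has_integral (integral ?K f - Henstock_Kurzweil_Integration.content ?K * c)) ?K"
    by (rule has_integral_diff[OF fi ci])
  have "norm (integral ?K f - Henstock_Kurzweil_Integration.content ?K * c) \<le> E * Henstock_Kurzweil_Integration.content ?K"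
    by (rule has_integral_bound[OF E di[unfolded K], folded K]) (use bd in auto)
  then have nb: "\<bar>integral ?K f - Henstock_Kurzweil_Integration.content ?K * c\<bar> \<le> E * Henstock_Kurzweil_Integration.content ?K" by simp
  have wA: "w ^ CARD('n) / cell_area t p * Henstock_Kurzweil_Integration.content ?K = 1" using ct A w by simp
  have "w ^ CARD('n) / cell_area t p * integral ?K f - c
      = w ^ CARD('n) / cell_area t p * (integral ?K f - Henstock_Kurzweil_Integration.content ?K * c)"
  proof -
    have gen: "q * k = 1 \<Longrightarrow> q * i - c = q * (i - k * c)" for q k i c :: real
      by (simp add: right_diff_distrib mult.assoc[symmetric])
    show ?thesis by (rule gen[OF wA])
  qed
  then have "\<bar>w ^ CARD('n) / cell_area t p * integral ?K f - c\<bar>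
      = w ^ CARD('n) / cell_area t p * \<bar>integral ?K f - Henstock_Kurzweil_Integration.content ?K * c\<bar>"
    using A w by (simp add: abs_mult)
  also have "\<dots> \<le> w ^ CARD('n) / cell_area t p * (E * Henstock_Kurzweil_Integration.content ?K)"
    using nb A w by (intro mult_left_mono) auto
  also have "\<dots> = E" using wA by (metis mult.left_commute mult.right_neutral)
  finally show ?thesis .
qed

lemma cell_dist:
  fixes t :: "'n::finite \<Rightarrow> int \<Rightarrow> real"
  assumes sp: "\<forall>i k. t i (k+1) - t i k \<le> \<Delta>" and w: "w > 0" and y: "y \<in> cell t w p"
  shows "norm (y - x) \<le> (\<Sum>i\<in>UNIV. (\<bar>w * x$i - t i (p i)\<bar> + \<Delta>) / w)"
proof -
  have "norm (y - x) \<le> (\<Sum>i\<in>UNIV. \<bar>(y - x)$i\<bar>)" by (rule norm_le_l1_cart)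
  also have "\<dots> \<le> (\<Sum>i\<in>UNIV. (\<bar>w * x$i - t i (p i)\<bar> + \<Delta>) / w)"
  proof (rule sum_mono)
    fix i
    have y1: "t i (p i) / w \<le> y$i" and y2: "y$i \<le> t i (p i + 1) / w"
      using y unfolding cell_def mem_box_cart by auto
    have "t i (p i + 1) / w - t i (p i) / w \<le> \<Delta> / w"
      using sp w by (simp add: diff_divide_distrib[symmetric] divide_right_mono)
    then have a: "\<bar>y$i - t i (p i) / w\<bar> \<le> \<Delta> / w" using y1 y2 by linarith
    have b: "\<bar>t i (p i) / w - x$i\<bar> = \<bar>w * x$i - t i (p i)\<bar> / w"
    proof -
      have "t i (p i) / w - x$i = - (w * x$i - t i (p i)) / w" using w by (simp add: field_simps)
      then show ?thesis using w by simp
    qed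
    have "\<bar>(y - x)$i\<bar> \<le> \<bar>y$i - t i (p i) / w\<bar> + \<bar>t i (p i) / w - x$i\<bar>" by simp
    also have "\<dots> \<le> (\<bar>w * x$i - t i (p i)\<bar> + \<Delta>) / w" using a b by (simp add: add_divide_distrib)
    finally show "\<bar>(y - x)$i\<bar> \<le> (\<bar>w * x$i - t i (p i)\<bar> + \<Delta>) / w" .
  qed
  finally show ?thesis .
qed


lemma prod_sum:
  fixes g :: "'n::finite \<Rightarrow> int \<Rightarrow> real"
  assumes gs: "\<And>i. g i summable_on UNIV"
  shows "(\<lambda>p. \<Prod>i\<in>UNIV. g i (p i)) summable_on UNIV \<and>
         infsum (\<lambda>p. \<Prod>i\<in>UNIV. g i (p i)) UNIV = (\<Prod>i\<in>UNIV. infsum (g i) UNIV)"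
proof -
  have a: "Infinite_Sum.abs_summable_on (g i) UNIV" for i
    using gs[of i] summable_on_iff_abs_summable_on_real by blast
  then have "Infinite_Set_Sum.abs_summable_on (g i) UNIV" for i using abs_summable_equivalent by blast
  then have "Infinite_Set_Sum.abs_summable_on (\<lambda>p. \<Prod>i\<in>UNIV. g i (p i)) (PiE UNIV (\<lambda>_. UNIV))"
    by (intro abs_summable_on_prod_PiE) auto
  then have "Infinite_Set_Sum.abs_summable_on (\<lambda>p. \<Prod>i\<in>UNIV. g i (p i)) UNIV" by simp
  then have "Infinite_Sum.abs_summable_on (\<lambda>p. \<Prod>i\<in>UNIV. g i (p i)) UNIV"
    by (rule iffD2[OF abs_summable_equivalent])
  then have s: "(\<lambda>p. \<Prod>i\<in>UNIV. g i (p i)) summable_on UNIV"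
    using summable_on_iff_abs_summable_on_real by blast
  have "infsum (\<lambda>p. \<Prod>i\<in>UNIV. g i (p i)) (PiE UNIV (\<lambda>_. UNIV)) = (\<Prod>i\<in>UNIV. infsum (g i) UNIV)"
    by (rule infsum_prod_PiE_abs) (use a in auto)
  then show ?thesis using s by simp
qed

lemma has_sum_diff':
  fixes f g :: "'a \<Rightarrow> real"
  assumes "(f has_sum a) A" "(g has_sum b) A"
  shows "((\<lambda>x. f x - g x) has_sum (a - b)) A"
proof -
  have "((\<lambda>x. - g x) has_sum (- b)) A" using assms(2) has_sum_uminus[where f=g and a="-b"] by simp
  from has_sum_add[OF assms(1) this] show ?thesis by simp
qed

lemma has_sum_sum':
  fixes f :: "'i \<Rightarrow> 'a \<Rightarrow> real"
  assumes "finite I" "\<And>i. i \<in> I \<Longrightarrow> (f i has_sum a i) A"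
  shows "((\<lambda>x. \<Sum>i\<in>I. f i x) has_sum (\<Sum>i\<in>I. a i)) A"
  using assms
proof (induction I rule: finite_induct)
  case empty then show ?case by simp
next
  case (insert j I)
  have "((\<lambda>x. f j x + (\<Sum>i\<in>I. f i x)) has_sum (a j + (\<Sum>i\<in>I. a i))) A"
    by (rule has_sum_add) (use insert in auto)
  then show ?case using insert by simp
qed

lemma prod_if_le:
  fixes c :: "'n::finite \<Rightarrow> real"
  assumes c0: "\<And>j. 0 \<le> c j" and ci: "c i \<le> a" and cj: "\<And>j. j \<noteq> i \<Longrightarrow> c j \<le> M" and M1: "M \<ge> 1"
  shows "(\<Prod>j\<in>UNIV. c j) \<le> a * M ^ CARD('n)"
proof -
  have "(\<Prod>j\<in>UNIV. c j) \<le> (\<Prod>j\<in>UNIV. if j = i then a else M)"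
    by (rule prod_mono) (use c0 ci cj in auto)
  also have "\<dots> = a * (\<Prod>j\<in>UNIV - {i}. if j = i then a else M)"
    by (subst prod.remove[of UNIV i]) auto
  also have "(\<Prod>j\<in>UNIV - {i}. if j = i then a else M) = (\<Prod>j\<in>UNIV - {i}. M)"
    by (rule prod.cong) auto
  also have "\<dots> = M ^ card (UNIV - {i} :: 'n set)" by simp
  also have "\<dots> \<le> M ^ CARD('n)" using M1 by (intro power_increasing) (auto intro: card_mono)
  finally show ?thesis
    using c0 ci M1 by (smt (verit) mult_left_mono)
qed

lemma prod_le_pow:
  fixes c :: "'n::finite \<Rightarrow> real"
  assumes c0: "\<And>j. 0 \<le> c j" and cj: "\<And>j. c j \<le> M" and M1: "M \<ge> 1"
  shows "(\<Prod>j\<in>UNIV. c j) \<le> M ^ CARD('n)"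
proof -
  have "(\<Prod>j\<in>UNIV. c j) \<le> (\<Prod>j\<in>(UNIV::'n set). M)" by (intro prod_mono) (use c0 cj in auto)
  then show ?thesis by simp
qed


lemma K1_m0:
  assumes "K1 s \<delta> chi B C R"
  shows "(\<lambda>k. \<bar>chi (x - s k)\<bar>) summable_on UNIV \<and>
    infsum (\<lambda>k. \<bar>chi (x - s k)\<bar>) UNIV \<le> 2 * (B * (R/\<delta> + 1) + 2 * C / \<delta>^2)"
proof -
  interpret K1 s \<delta> chi B C R by fact
  show ?thesis using m0 unfolding M0_def .
qed

lemma K1_mid:
  assumes "K1 s \<delta> chi B C R" "w \<ge> \<delta>"
  shows "(\<lambda>k. \<bar>chi (x - s k)\<bar> * (if \<bar>x - s k\<bar> \<le> w then \<bar>x - s k\<bar> else 0)) summable_on UNIV \<and>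
         infsum (\<lambda>k. \<bar>chi (x - s k)\<bar> * (if \<bar>x - s k\<bar> \<le> w then \<bar>x - s k\<bar> else 0)) UNIV
           \<le> 2 * (B * (R/\<delta> + 1) * (R + \<delta>) + C / \<delta> * (1 + ln (w/\<delta>)))"
proof -
  interpret K1 s \<delta> chi B C R by fact
  show ?thesis using mid[OF assms(2)] unfolding P1_def .
qed

lemma K1_tail:
  assumes "K1 s \<delta> chi B C R" "w \<ge> R + \<delta>" "w \<ge> 2 * \<delta>"
  shows "(\<lambda>k. if w < \<bar>x - s k\<bar> then \<bar>chi (x - s k)\<bar> else 0) summable_on UNIV \<and>
         infsum (\<lambda>k. if w < \<bar>x - s k\<bar> then \<bar>chi (x - s k)\<bar> else 0) UNIV \<le> 8 * C / (\<delta> * w)"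
proof -
  interpret K1 s \<delta> chi B C R by fact
  show ?thesis using tail[OF assms(2,3)] .
qed

lemma K1_pos:
  assumes "K1 s \<delta> chi B C R"
  shows "\<delta> > 0" "C > 0" "R \<ge> 1" "B \<ge> 0"
proof -
  interpret K1 s \<delta> chi B C R by fact
  show "\<delta> > 0" "C > 0" "R \<ge> 1" "B \<ge> 0" using dpos Cp R1 B0 by auto
qed


locale MD =
  fixes t :: "'n::finite \<Rightarrow> int \<Rightarrow> real" and \<delta> \<Delta> :: real and chi :: "real \<Rightarrow> real" and B C R :: real
  assumes K: "\<And>i. K1 (t i) \<delta> chi B C R"
    and inc: "\<forall>i k. t i k < t i (k+1)" and sp: "\<forall>i k. t i (k+1) - t i k \<le> \<Delta>"
    and pu: "\<And>i y. ((\<lambda>k. chi (y - t i k)) has_sum 1) UNIV"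
begin

definition Mx where "Mx = max 1 (2 * (B * (R/\<delta> + 1) + 2 * C / \<delta>^2))"

lemma Mx1: "Mx \<ge> 1" unfolding Mx_def by simp

definition psi :: "real \<Rightarrow> real \<Rightarrow> real" where "psi w u = (if \<bar>u\<bar> \<le> w then \<bar>u\<bar> else 0)"
definition tau :: "real \<Rightarrow> real \<Rightarrow> real" where "tau w u = (if w < \<bar>u\<bar> then 1 else 0)"

lemma psi0: "psi w u \<ge> 0" unfolding psi_def by auto
lemma tau0: "tau w u \<ge> 0" unfolding tau_def by auto

lemma sum_abs_X:
  "(\<lambda>p. \<bar>\<Prod>i\<in>UNIV. chi (y$i - t i (p i))\<bar>) summable_on UNIV \<and>
   infsum (\<lambda>p. \<bar>\<Prod>i\<in>UNIV. chi (y$i - t i (p i))\<bar>) UNIV \<le> Mx ^ CARD('n)"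
proof -
  let ?g = "\<lambda>i k. \<bar>chi (y$i - t i k)\<bar>"
  have gs: "?g i summable_on UNIV" for i using K1_m0[OF K[of i], of "y$i"] by blast
  have e: "\<bar>\<Prod>i\<in>UNIV. chi (y$i - t i (p i))\<bar> = (\<Prod>i\<in>UNIV. ?g i (p i))" for p by (simp add: abs_prod)
  have P: "(\<lambda>p. \<Prod>i\<in>UNIV. ?g i (p i)) summable_on UNIV \<and>
         infsum (\<lambda>p. \<Prod>i\<in>UNIV. ?g i (p i)) UNIV = (\<Prod>i\<in>UNIV. infsum (?g i) UNIV)"
    by (rule prod_sum) (rule gs)
  have "(\<Prod>i\<in>UNIV. infsum (?g i) UNIV) \<le> Mx ^ CARD('n)"
  proof (rule prod_le_pow[OF _ _ Mx1])
    show "0 \<le> infsum (?g i) UNIV" for i by (rule infsum_nonneg) simp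
    show "infsum (?g i) UNIV \<le> Mx" for i using K1_m0[OF K[of i], of "y$i"] unfolding Mx_def by linarith
  qed
  then show ?thesis using P e by simp
qed

lemma sum_weighted:
  fixes h :: "real \<Rightarrow> real" and i :: 'n and Bd :: real
  assumes h0: "\<And>u. h u \<ge> 0"
    and hs: "\<And>j. (\<lambda>k. \<bar>chi (y$j - t j k)\<bar> * h (y$j - t j k)) summable_on UNIV \<and>
                 infsum (\<lambda>k. \<bar>chi (y$j - t j k)\<bar> * h (y$j - t j k)) UNIV \<le> Bd"
  shows "(\<lambda>p. \<bar>\<Prod>j\<in>UNIV. chi (y$j - t j (p j))\<bar> * h (y$i - t i (p i))) summable_on UNIV \<and>
   infsum (\<lambda>p. \<bar>\<Prod>j\<in>UNIV. chi (y$j - t j (p j))\<bar> * h (y$i - t i (p i))) UNIV \<le> Bd * Mx ^ CARD('n)"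
proof -
  let ?g = "\<lambda>j k. \<bar>chi (y$j - t j k)\<bar> * (if j = i then h (y$j - t j k) else 1)"
  have gs: "?g j summable_on UNIV" for j
  proof (cases "j = i")
    case True then show ?thesis using hs[of j] by simp
  next
    case False then show ?thesis using K1_m0[OF K[of j], of "y$j"] by simp
  qed
  have e: "\<bar>\<Prod>j\<in>UNIV. chi (y$j - t j (p j))\<bar> * h (y$i - t i (p i)) = (\<Prod>j\<in>UNIV. ?g j (p j))" for p
  proof -
    have "(\<Prod>j\<in>UNIV. ?g j (p j)) = (\<Prod>j\<in>UNIV. \<bar>chi (y$j - t j (p j))\<bar>) * (\<Prod>j\<in>UNIV. if j = i then h (y$j - t j (p j)) else 1)"
      by (rule prod.distrib)
    also have "(\<Prod>j\<in>UNIV. if j = i then h (y$j - t j (p j)) else 1) = h (y$i - t i (p i))"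
      by (subst prod.delta) auto
    finally show ?thesis by (simp add: abs_prod)
  qed
  have P: "(\<lambda>p. \<Prod>j\<in>UNIV. ?g j (p j)) summable_on UNIV \<and>
         infsum (\<lambda>p. \<Prod>j\<in>UNIV. ?g j (p j)) UNIV = (\<Prod>j\<in>UNIV. infsum (?g j) UNIV)"
    by (rule prod_sum) (rule gs)
  have "(\<Prod>j\<in>UNIV. infsum (?g j) UNIV) \<le> Bd * Mx ^ CARD('n)"
  proof (rule prod_if_le[OF _ _ _ Mx1])
    show "0 \<le> infsum (?g j) UNIV" for j by (rule infsum_nonneg) (simp add: h0)
    show "infsum (?g i) UNIV \<le> Bd" using hs[of i] by simp
    show "infsum (?g j) UNIV \<le> Mx" if "j \<noteq> i" for j
    proof -
      have "infsum (?g j) UNIV = infsum (\<lambda>k. \<bar>chi (y$j - t j k)\<bar>) UNIV" using that by simp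
      then show ?thesis using K1_m0[OF K[of j], of "y$j"] unfolding Mx_def by linarith
    qed
  qed
  then show ?thesis using P e by simp
qed


lemma Dpos: "\<Delta> > 0"
  using inc sp by (metis diff_gt_0_iff_gt order_less_le_trans)

lemma pointwise:
  fixes f :: "real^'n \<Rightarrow> real"
  assumes fc: "continuous_on UNIV f" and bf: "bounded (range f)"
    and w: "w > 0" and L: "ln w > 0"
  shows "\<bar>w ^ CARD('n) / cell_area t p * integral (cell t w p) f - f x\<bar>
     \<le> modcont f (ln w / w) * (1 + real CARD('n) * \<Delta> / ln w)
       + modcont f (ln w / w) / ln w * (\<Sum>i\<in>UNIV. psi w (w * x$i - t i (p i)))
       + 2 * supnorm f * (\<Sum>i\<in>UNIV. tau w (w * x$i - t i (p i)))"
proof -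
  let ?om = "modcont f (ln w / w)" and ?S = "supnorm f" and ?L = "ln w"
  let ?avg = "w ^ CARD('n) / cell_area t p * integral (cell t w p) f"
  have om0: "?om \<ge> 0" using modcont_nonneg[OF bf] w L by simp
  have S0: "?S \<ge> 0" using supnorm_nonneg[OF bf] .
  have ps0: "(\<Sum>i\<in>UNIV. psi w (w * x$i - t i (p i))) \<ge> 0" by (rule sum_nonneg) (rule psi0)
  have ta0: "(\<Sum>i\<in>UNIV. tau w (w * x$i - t i (p i))) \<ge> 0" by (rule sum_nonneg) (rule tau0)
  have t1: "?om / ?L * (\<Sum>i\<in>UNIV. psi w (w * x$i - t i (p i))) \<ge> 0" using om0 L ps0 by simp
  have t0: "?om * (1 + real CARD('n) * \<Delta> / ?L) \<ge> 0" using om0 L Dpos by simp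
  show ?thesis
  proof (cases "\<forall>i. \<bar>w * x$i - t i (p i)\<bar> \<le> w")
    case True
    have pe: "(\<Sum>i\<in>UNIV. psi w (w * x$i - t i (p i))) = (\<Sum>i\<in>UNIV. \<bar>w * x$i - t i (p i)\<bar>)"
      using True unfolding psi_def by simp
    let ?E = "?om * (1 + real CARD('n) * \<Delta> / ?L) + ?om / ?L * (\<Sum>i\<in>UNIV. psi w (w * x$i - t i (p i)))"
    have "\<bar>?avg - f x\<bar> \<le> ?E"
    proof (rule avg_bound[OF inc w fc])
      show "0 \<le> ?E" using t0 t1 by linarith
      fix z assume z: "z \<in> cell t w p"
      have nz: "norm (z - x) \<le> (\<Sum>i\<in>UNIV. (\<bar>w * x$i - t i (p i)\<bar> + \<Delta>) / w)"
        by (rule cell_dist[OF sp w z])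
      also have "\<dots> = ((\<Sum>i\<in>UNIV. \<bar>w * x$i - t i (p i)\<bar>) + real CARD('n) * \<Delta>) / w"
        by (simp add: sum_divide_distrib[symmetric] sum.distrib)
      finally have nz2: "norm (z - x) / (?L / w) \<le> ((\<Sum>i\<in>UNIV. \<bar>w * x$i - t i (p i)\<bar>) + real CARD('n) * \<Delta>) / ?L"
        using w L by (simp add: field_simps)
      have "\<bar>f z - f x\<bar> = \<bar>f (x + (z - x)) - f x\<bar>" by simp
      also have "\<dots> \<le> (1 + norm (z - x) / (?L / w)) * ?om"
        by (rule modcont_mult[OF bf]) (use w L in simp)
      also have "\<dots> \<le> (1 + ((\<Sum>i\<in>UNIV. \<bar>w * x$i - t i (p i)\<bar>) + real CARD('n) * \<Delta>) / ?L) * ?om"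
        using nz2 om0 by (intro mult_right_mono) auto
      also have "\<dots> = ?E" unfolding pe using L by (simp add: field_simps)
      finally show "\<bar>f z - f x\<bar> \<le> ?E" .
    qed
    moreover have "2 * ?S * (\<Sum>i\<in>UNIV. tau w (w * x$i - t i (p i))) \<ge> 0" using S0 ta0 by simp
    ultimately show ?thesis by linarith
  next
    case False
    then obtain i0 where i0: "w < \<bar>w * x$i0 - t i0 (p i0)\<bar>" by (auto simp: not_le)
    have "1 \<le> (\<Sum>i\<in>UNIV. tau w (w * x$i - t i (p i)))"
    proof -
      have "tau w (w * x$i0 - t i0 (p i0)) \<le> (\<Sum>i\<in>UNIV. tau w (w * x$i - t i (p i)))"
        by (rule member_le_sum) (auto intro: tau0)
      then show ?thesis using i0 unfolding tau_def by simp
    qed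
    then have ts: "2 * ?S \<le> 2 * ?S * (\<Sum>i\<in>UNIV. tau w (w * x$i - t i (p i)))"
      using S0 by (metis mult_left_mono mult.right_neutral zero_le_numeral mult_nonneg_nonneg)
    have "\<bar>?avg - 0\<bar> \<le> ?S"
      by (rule avg_bound[OF inc w fc S0]) (use supnorm_ge[OF bf] in simp)
    moreover have "\<bar>f x\<bar> \<le> ?S" by (rule supnorm_ge[OF bf])
    ultimately have "\<bar>?avg - f x\<bar> \<le> 2 * ?S" by linarith
    then show ?thesis using ts t0 t1 by linarith
  qed
qed


lemma est:
  fixes f :: "real^'n \<Rightarrow> real" and x :: "real^'n"
  assumes fc: "continuous_on UNIV f" and bf: "bounded (range f)"
    and w1: "w \<ge> R + \<delta>" and w2: "w \<ge> 2 * \<delta>" and wL: "1 \<le> ln w"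
  shows "\<bar>kantorovich t (\<lambda>y. \<Prod>i\<in>UNIV. chi (y$i)) w f x - f x\<bar>
      \<le> modcont f (ln w / w) * (1 + real CARD('n) * \<Delta> / ln w) * Mx ^ CARD('n)
        + modcont f (ln w / w) / ln w * (real CARD('n) * ((2 * (B * (R/\<delta> + 1) * (R + \<delta>) + C / \<delta> * (1 + ln (w/\<delta>)))) * Mx ^ CARD('n)))
        + 2 * supnorm f * (real CARD('n) * (8 * C / (\<delta> * w) * Mx ^ CARD('n)))"
proof -
  have dpos: "\<delta> > 0" using K1_pos[OF K] by auto
  have w: "w > 0" using w2 dpos by linarith
  have wd: "w \<ge> \<delta>" using w2 dpos by linarith
  have L: "ln w > 0" using wL by linarith
  let ?om = "modcont f (ln w / w)" and ?S = "supnorm f" and ?L = "ln w" and ?n = "real CARD('n)"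
  let ?Bm = "2 * (B * (R/\<delta> + 1) * (R + \<delta>) + C / \<delta> * (1 + ln (w/\<delta>)))"
  let ?Bt = "8 * C / (\<delta> * w)"
  have om0: "?om \<ge> 0" using modcont_nonneg[OF bf] w L by simp
  have S0: "?S \<ge> 0" using supnorm_nonneg[OF bf] .
  define y where "y = w *\<^sub>R x"
  have yi: "y$i = w * x$i" for i unfolding y_def by simp
  define Xp where "Xp p = (\<Prod>i\<in>UNIV. chi (y$i - t i (p i)))" for p :: "'n \<Rightarrow> int"
  define avg where "avg p = w ^ CARD('n) / cell_area t p * integral (cell t w p) f" for p :: "'n \<Rightarrow> int"
  define ps where "ps i p = psi w (y$i - t i (p i))" for i and p :: "'n \<Rightarrow> int"
  define ta where "ta i p = tau w (y$i - t i (p i))" for i and p :: "'n \<Rightarrow> int"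
  have b1: "\<bar>avg p - f x\<bar> \<le> ?om * (1 + ?n * \<Delta> / ?L) + ?om / ?L * (\<Sum>i\<in>UNIV. ps i p) + 2 * ?S * (\<Sum>i\<in>UNIV. ta i p)" for p
    using pointwise[OF fc bf w L, of p x] unfolding avg_def ps_def ta_def yi .
  have avgS: "\<bar>avg p\<bar> \<le> ?S" for p
    using avg_bound[OF inc w fc S0, where p=p and c=0] supnorm_ge[OF bf] unfolding avg_def by simp
  have sX: "(\<lambda>p. \<bar>Xp p\<bar>) summable_on UNIV \<and> infsum (\<lambda>p. \<bar>Xp p\<bar>) UNIV \<le> Mx ^ CARD('n)"
    using sum_abs_X[of y] unfolding Xp_def .
  have sM: "(\<lambda>p. \<bar>Xp p\<bar> * ps i p) summable_on UNIV \<and> infsum (\<lambda>p. \<bar>Xp p\<bar> * ps i p) UNIV \<le> ?Bm * Mx ^ CARD('n)" for i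
    unfolding Xp_def ps_def
  proof (rule sum_weighted[OF psi0])
    fix j
    have "(\<lambda>k. \<bar>chi (y$j - t j k)\<bar> * psi w (y$j - t j k))
        = (\<lambda>k. \<bar>chi (y$j - t j k)\<bar> * (if \<bar>y$j - t j k\<bar> \<le> w then \<bar>y$j - t j k\<bar> else 0))"
      unfolding psi_def by simp
    then show "(\<lambda>k. \<bar>chi (y$j - t j k)\<bar> * psi w (y$j - t j k)) summable_on UNIV \<and>
       infsum (\<lambda>k. \<bar>chi (y$j - t j k)\<bar> * psi w (y$j - t j k)) UNIV \<le> ?Bm"
      using K1_mid[OF K[of j] wd, of "y$j"] by simp
  qed
  have sT: "(\<lambda>p. \<bar>Xp p\<bar> * ta i p) summable_on UNIV \<and> infsum (\<lambda>p. \<bar>Xp p\<bar> * ta i p) UNIV \<le> ?Bt * Mx ^ CARD('n)" for i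
    unfolding Xp_def ta_def
  proof (rule sum_weighted[OF tau0])
    fix j
    have "(\<lambda>k. \<bar>chi (y$j - t j k)\<bar> * tau w (y$j - t j k))
        = (\<lambda>k. if w < \<bar>y$j - t j k\<bar> then \<bar>chi (y$j - t j k)\<bar> else 0)"
      unfolding tau_def by (auto simp: fun_eq_iff)
    then show "(\<lambda>k. \<bar>chi (y$j - t j k)\<bar> * tau w (y$j - t j k)) summable_on UNIV \<and>
       infsum (\<lambda>k. \<bar>chi (y$j - t j k)\<bar> * tau w (y$j - t j k)) UNIV \<le> ?Bt"
      using K1_tail[OF K[of j] w1 w2, of "y$j"] by simp
  qed
  have pX: "(Xp has_sum 1) UNIV"
  proof -
    have gs: "(\<lambda>k. chi (y$i - t i k)) summable_on UNIV" for i using pu[where i=i and y="y$i"] by (meson summable_on_def)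
    have g1: "infsum (\<lambda>k. chi (y$i - t i k)) UNIV = 1" for i using pu[where i=i and y="y$i"] by (rule infsumI)
    have "Xp summable_on UNIV \<and> infsum Xp UNIV = 1"
      using prod_sum[where g="\<lambda>i k. chi (y$i - t i k)", OF gs] g1 unfolding Xp_def by simp
    then show ?thesis using has_sum_infsum by fastforce
  qed
  have Keq: "kantorovich t (\<lambda>y. \<Prod>i\<in>UNIV. chi (y$i)) w f x = infsum (\<lambda>p. Xp p * avg p) UNIV"
    unfolding kantorovich_def
  proof (rule infsum_cong)
    fix p
    have "(\<Prod>i\<in>UNIV. chi ((w *\<^sub>R x - node_vec t p)$i)) = Xp p"
      unfolding Xp_def y_def node_vec_def by simp
    then show "(\<Prod>i\<in>UNIV. chi ((w *\<^sub>R x - node_vec t p)$i)) * (w ^ CARD('n) / cell_area t p) * integral (cell t w p) f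
        = Xp p * avg p" unfolding avg_def by (simp add: mult.assoc)
  qed
  have sXS: "(\<lambda>p. \<bar>Xp p\<bar> * ?S) summable_on UNIV" using sX summable_on_cmult_left by blast
  have sXa: "(\<lambda>p. Xp p * avg p) summable_on UNIV"
  proof -
    have "Infinite_Sum.abs_summable_on (\<lambda>p. \<bar>Xp p\<bar> * ?S) UNIV"
      using sXS S0 by (simp add: abs_mult)
    then have "Infinite_Sum.abs_summable_on (\<lambda>p. Xp p * avg p) UNIV"
      by (rule Infinite_Sum.abs_summable_on_comparison_test)
         (use avgS S0 in \<open>auto simp: abs_mult intro: mult_left_mono\<close>)
    then show ?thesis using summable_on_iff_abs_summable_on_real by blast
  qed
  define Kv where "Kv = infsum (\<lambda>p. Xp p * avg p) UNIV"
  have hK: "((\<lambda>p. Xp p * avg p) has_sum Kv) UNIV" using sXa unfolding Kv_def by simp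
  have hF: "((\<lambda>p. Xp p * f x) has_sum (1 * f x)) UNIV" by (rule has_sum_cmult_left[OF pX])
  have hD: "((\<lambda>p. Xp p * avg p - Xp p * f x) has_sum (Kv - f x)) UNIV"
    using has_sum_diff'[OF hK hF] by simp
  define Gf where "Gf p = \<bar>Xp p\<bar> * \<bar>avg p - f x\<bar>" for p
  have sG: "Gf summable_on UNIV"
  proof (rule summable_on_comparison_test)
    show "(\<lambda>p. 2 * (\<bar>Xp p\<bar> * ?S)) summable_on UNIV" using sXS summable_on_cmult_right by blast
    fix p
    have "\<bar>avg p - f x\<bar> \<le> 2 * ?S" using avgS[of p] supnorm_ge[OF bf, of x] by linarith
    then show "Gf p \<le> 2 * (\<bar>Xp p\<bar> * ?S)" unfolding Gf_def
      by (metis abs_ge_zero mult.left_commute mult_left_mono)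
    show "0 \<le> Gf p" unfolding Gf_def by simp
  qed
  have n1: "\<bar>Kv - f x\<bar> \<le> infsum Gf UNIV"
    using norm_infsum_le[OF hD has_sum_infsum[OF sG]] unfolding Gf_def
    by (simp add: abs_mult right_diff_distrib[symmetric])
  define Fm where "Fm p = ?om * (1 + ?n * \<Delta> / ?L) * \<bar>Xp p\<bar> + ?om / ?L * (\<Sum>i\<in>UNIV. \<bar>Xp p\<bar> * ps i p)
      + 2 * ?S * (\<Sum>i\<in>UNIV. \<bar>Xp p\<bar> * ta i p)" for p
  define V where "V = ?om * (1 + ?n * \<Delta> / ?L) * infsum (\<lambda>p. \<bar>Xp p\<bar>) UNIV
      + ?om / ?L * (\<Sum>i\<in>UNIV. infsum (\<lambda>p. \<bar>Xp p\<bar> * ps i p) UNIV)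
      + 2 * ?S * (\<Sum>i\<in>UNIV. infsum (\<lambda>p. \<bar>Xp p\<bar> * ta i p) UNIV)"
  have hFm: "(Fm has_sum V) UNIV"
    unfolding Fm_def V_def
  proof (intro has_sum_add has_sum_cmult_right has_sum_sum')
    show "((\<lambda>p. \<bar>Xp p\<bar>) has_sum infsum (\<lambda>p. \<bar>Xp p\<bar>) UNIV) UNIV" using sX by simp
    show "((\<lambda>p. \<bar>Xp p\<bar> * ps i p) has_sum infsum (\<lambda>p. \<bar>Xp p\<bar> * ps i p) UNIV) UNIV" for i using sM[of i] by simp
    show "((\<lambda>p. \<bar>Xp p\<bar> * ta i p) has_sum infsum (\<lambda>p. \<bar>Xp p\<bar> * ta i p) UNIV) UNIV" for i using sT[of i] by simp
  qed simp_all
  have GF: "Gf p \<le> Fm p" for p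
  proof -
    have "Gf p \<le> \<bar>Xp p\<bar> * (?om * (1 + ?n * \<Delta> / ?L) + ?om / ?L * (\<Sum>i\<in>UNIV. ps i p) + 2 * ?S * (\<Sum>i\<in>UNIV. ta i p))"
      unfolding Gf_def using b1[of p] by (intro mult_left_mono) auto
    also have "\<dots> = Fm p" unfolding Fm_def by (simp add: algebra_simps sum_distrib_left sum_divide_distrib)
    finally show ?thesis .
  qed
  have n2: "infsum Gf UNIV \<le> V"
    using infsum_mono[OF sG _ GF] hFm by (metis has_sum_iff)
  have v1: "?om * (1 + ?n * \<Delta> / ?L) * infsum (\<lambda>p. \<bar>Xp p\<bar>) UNIV \<le> ?om * (1 + ?n * \<Delta> / ?L) * Mx ^ CARD('n)"
    using sX om0 L Dpos by (intro mult_left_mono) auto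
  have v2: "(\<Sum>i\<in>UNIV. infsum (\<lambda>p. \<bar>Xp p\<bar> * ps i p) UNIV) \<le> ?n * (?Bm * Mx ^ CARD('n))"
    using sum_bounded_above[of UNIV "\<lambda>i. infsum (\<lambda>p. \<bar>Xp p\<bar> * ps i p) UNIV" "?Bm * Mx ^ CARD('n)"] sM by auto
  have v3: "(\<Sum>i\<in>UNIV. infsum (\<lambda>p. \<bar>Xp p\<bar> * ta i p) UNIV) \<le> ?n * (?Bt * Mx ^ CARD('n))"
    using sum_bounded_above[of UNIV "\<lambda>i. infsum (\<lambda>p. \<bar>Xp p\<bar> * ta i p) UNIV" "?Bt * Mx ^ CARD('n)"] sT by auto
  have v2': "?om / ?L * (\<Sum>i\<in>UNIV. infsum (\<lambda>p. \<bar>Xp p\<bar> * ps i p) UNIV) \<le> ?om / ?L * (?n * (?Bm * Mx ^ CARD('n)))"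
    using v2 om0 L by (intro mult_left_mono) auto
  have v3': "2 * ?S * (\<Sum>i\<in>UNIV. infsum (\<lambda>p. \<bar>Xp p\<bar> * ta i p) UNIV) \<le> 2 * ?S * (?n * (?Bt * Mx ^ CARD('n)))"
    using v3 S0 by (intro mult_left_mono) auto
  have "V \<le> ?om * (1 + ?n * \<Delta> / ?L) * Mx ^ CARD('n) + ?om / ?L * (?n * (?Bm * Mx ^ CARD('n)))
        + 2 * ?S * (?n * (?Bt * Mx ^ CARD('n)))"
    unfolding V_def using v1 v2' v3' by linarith
  then show ?thesis using n1 n2 Keq unfolding Kv_def by linarith
qed

end


lemma final_arith:
  fixes om S L w nD M n Bm a b Ct :: real
  assumes om: "om \<ge> 0" and S: "S \<ge> 0" and L: "L \<ge> 1" and w: "w > 0" and nD: "nD \<ge> 0"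
    and M: "M \<ge> 0" and n: "n \<ge> 0" and Bm: "Bm = a + b * L" and b: "b \<ge> 0" and Ct: "Ct \<ge> 0"
  shows "om * (1 + nD / L) * M + om / L * (n * (Bm * M)) + 2 * S * (n * (Ct / w * M))
      \<le> (max ((1 + nD) * M + n * (\<bar>a\<bar> + b) * M) (2 * n * Ct * M) + 1) * (om + S / w)"
proof -
  let ?K = "max ((1 + nD) * M + n * (\<bar>a\<bar> + b) * M) (2 * n * Ct * M) + 1"
  have L0: "L > 0" using L by linarith
  have q1: "nD / L \<le> nD"
  proof -
    have "nD * 1 \<le> nD * L" using L nD by (intro mult_left_mono) auto
    then show ?thesis by (simp add: pos_divide_le_eq[OF L0])
  qed
  have q2: "Bm / L \<le> \<bar>a\<bar> + b"
  proof -
    have "Bm / L = a / L + b" using Bm L0 by (simp add: add_divide_distrib)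
    moreover have "a / L \<le> \<bar>a\<bar>"
    proof -
      have "a / L \<le> \<bar>a\<bar> / L" using L0 by (simp add: divide_right_mono)
      also have "\<dots> \<le> \<bar>a\<bar> / 1" using L by (intro divide_left_mono) auto
      finally show ?thesis by simp
    qed
    ultimately show ?thesis by linarith
  qed
  have T1: "om * (1 + nD / L) * M \<le> om * ((1 + nD) * M)"
    using q1 om M by (simp add: mult_left_mono mult_right_mono mult.assoc)
  have T2: "om / L * (n * (Bm * M)) \<le> om * (n * (\<bar>a\<bar> + b) * M)"
  proof -
    have "om / L * (n * (Bm * M)) = om * n * M * (Bm / L)" by simp
    also have "\<dots> \<le> om * n * M * (\<bar>a\<bar> + b)" using q2 om n M by (intro mult_left_mono) auto
    also have "\<dots> = om * (n * (\<bar>a\<bar> + b) * M)" by simp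
    finally show ?thesis .
  qed
  have T3: "2 * S * (n * (Ct / w * M)) = S / w * (2 * n * Ct * M)" by simp
  have k1: "(1 + nD) * M + n * (\<bar>a\<bar> + b) * M \<le> ?K" by simp
  have k2: "2 * n * Ct * M \<le> ?K" by simp
  have "om * ((1 + nD) * M) + om * (n * (\<bar>a\<bar> + b) * M) = om * ((1 + nD) * M + n * (\<bar>a\<bar> + b) * M)"
    by (simp add: algebra_simps)
  also have "\<dots> \<le> om * ?K" using k1 om by (intro mult_left_mono) auto
  finally have A: "om * ((1 + nD) * M) + om * (n * (\<bar>a\<bar> + b) * M) \<le> om * ?K" .
  have Bq: "S / w * (2 * n * Ct * M) \<le> S / w * ?K" using k2 S w by (intro mult_left_mono) auto
  have "?K * (om + S / w) = om * ?K + S / w * ?K" by (simp add: algebra_simps)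
  then show ?thesis using T1 T2 T3 A Bq by linarith
qed


theorem mainTheorem1:
  fixes t :: "'n::finite \<Rightarrow> int \<Rightarrow> real" and chi :: "real \<Rightarrow> real"
  assumes "node_seq t"
    and "\<forall>i. kernel1 (t i) chi"
    and "chi \<in> O[at_infinity](\<lambda>x. 1 / x ^ 2)"
    and "\<forall>i. moment1 (t i) chi 1 = \<infinity>"
  shows "\<exists>K>0. \<forall>f :: real^'n \<Rightarrow> real.
           uniformly_continuous_on UNIV f \<and> bounded (range f) \<longrightarrow>
           (\<forall>\<^sub>F w in at_top. \<forall>x.
              \<bar>kantorovich t (\<lambda>y. \<Prod>i\<in>UNIV. chi (y $ i)) w f x - f x\<bar>
                \<le> K * (modcont f (ln w / w) + supnorm f / w))"
proof -
  obtain \<delta> \<Delta> where d: "0 < \<delta>" and tt: "\<forall>i. strict_mono (t i) \<and>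
          (\<forall>k. \<delta> \<le> t i (k + 1) - t i k \<and> t i (k + 1) - t i k \<le> \<Delta>)"
    using assms(1) unfolding node_seq_def by blast
  obtain B where Bb: "\<forall>u. \<bar>chi u\<bar> \<le> B" using kernel_bounded assms(2) by blast
  obtain C R where CR: "C > 0" "R \<ge> 1" "\<forall>u. R \<le> \<bar>u\<bar> \<longrightarrow> \<bar>chi u\<bar> \<le> C / u^2"
    using kernel_decay[OF assms(3)] by blast
  have K1i: "K1 (t i) \<delta> chi B C R" for i
  proof
    show "\<forall>k. t i k + \<delta> \<le> t i (k + 1)" using tt by (smt (verit))
  qed (use d Bb CR in auto)
  have inc: "\<forall>i k. t i k < t i (k+1)" using tt d by (smt (verit))
  have sp: "\<forall>i k. t i (k+1) - t i k \<le> \<Delta>" using tt by blast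
  have pu: "((\<lambda>k. chi (y - t i k)) has_sum 1) UNIV" for i y
    using assms(2) unfolding kernel1_def by blast
  interpret MD t \<delta> \<Delta> chi B C R
    by (rule MD.intro) (use K1i inc sp pu in auto)
  define n where "n = real CARD('n)"
  define M where "M = Mx ^ CARD('n)"
  define P where "P = B * (R/\<delta> + 1) * (R + \<delta>)"
  define a where "a = 2 * (P + C / \<delta> * (1 - ln \<delta>))"
  define b where "b = 2 * C / \<delta>"
  define Ct where "Ct = 8 * C / \<delta>"
  define K where "K = max ((1 + n * \<Delta>) * M + n * (\<bar>a\<bar> + b) * M) (2 * n * Ct * M) + 1"
  have M0: "M \<ge> 0" unfolding M_def using Mx1 by simp
  have n0: "n \<ge> 0" unfolding n_def by simp
  have Kpos: "K > 0"
  proof -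
    have "0 \<le> 2 * n * Ct * M" unfolding Ct_def using n0 M0 CR d by simp
    then show ?thesis unfolding K_def by linarith
  qed
  show ?thesis
  proof (intro exI[of _ K] conjI allI impI Kpos)
    fix f :: "real^'n \<Rightarrow> real"
    assume fa: "uniformly_continuous_on UNIV f \<and> bounded (range f)"
    then have fc: "continuous_on UNIV f" and bf: "bounded (range f)"
      using uniformly_continuous_imp_continuous by auto
    have ev: "\<forall>\<^sub>F w in at_top. w \<ge> max (max (R + \<delta>) (2 * \<delta>)) (exp 1)" by (rule eventually_ge_at_top)
    show "\<forall>\<^sub>F w in at_top. \<forall>x.
              \<bar>kantorovich t (\<lambda>y. \<Prod>i\<in>UNIV. chi (y $ i)) w f x - f x\<bar>
                \<le> K * (modcont f (ln w / w) + supnorm f / w)"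
    proof (rule eventually_mono[OF ev], intro allI)
      fix w x assume w: "max (max (R + \<delta>) (2 * \<delta>)) (exp 1) \<le> w"
      have w1: "w \<ge> R + \<delta>" and w2: "w \<ge> 2 * \<delta>" and we: "w \<ge> exp 1" using w by auto
      have wp: "w > 0" using w2 d by linarith
      have wL: "1 \<le> ln w" using we wp by (metis ln_exp ln_le_cancel_iff exp_gt_zero)
      have Bm: "2 * (B * (R/\<delta> + 1) * (R + \<delta>) + C / \<delta> * (1 + ln (w/\<delta>))) = a + b * ln w"
        unfolding a_def b_def P_def using d wp by (simp add: ln_div algebra_simps)
      have "\<bar>kantorovich t (\<lambda>y. \<Prod>i\<in>UNIV. chi (y$i)) w f x - f x\<bar>
        \<le> modcont f (ln w / w) * (1 + n * \<Delta> / ln w) * M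
          + modcont f (ln w / w) / ln w * (n * ((a + b * ln w) * M))
          + 2 * supnorm f * (n * (Ct / w * M))"
        using est[OF fc bf w1 w2 wL, of x] unfolding n_def M_def Ct_def Bm by (simp add: mult.assoc)
      also have "\<dots> \<le> K * (modcont f (ln w / w) + supnorm f / w)"
        unfolding K_def
      proof (rule final_arith)
        have "0 \<le> ln w" using wL by linarith
        then have "0 \<le> ln w / w" using wp by (rule divide_nonneg_pos)
        then show "modcont f (ln w / w) \<ge> 0" by (rule modcont_nonneg[OF bf])
        show "supnorm f \<ge> 0" using supnorm_nonneg[OF bf] .
        show "n * \<Delta> \<ge> 0" using n0 Dpos by simp
        show "b \<ge> 0" unfolding b_def using CR d by simp
        show "Ct \<ge> 0" unfolding Ct_def using CR d by simp
      qed (use wL wp M0 n0 in auto)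
      finally show "\<bar>kantorovich t (\<lambda>y. \<Prod>i\<in>UNIV. chi (y $ i)) w f x - f x\<bar>
                \<le> K * (modcont f (ln w / w) + supnorm f / w)" .
    qed
  qed
qed


end
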